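(* Let $A,B\in\mathbb{R}[x]$. If $(A,B)$ is an interpolatory 1-cube, then $(A,B,B,xA)$ is an interpolatory square.
   Context: A polynomial is standard if it is $\equiv0$ or has positive leading coefficient. It has only nonpositive zeros if it is $\equiv0$ or all its zeros are real and $\le0$. Relation $\prec$: for $A,B$ with only real zeros, with zeros $\xi_1\le\cdots\le\xi_a$ of $A$ and $\theta_1\le\cdots\le\theta_b$ of $B$, $A\prec B$ means one of the following: - $\deg B=\deg A+1$ and $\theta_1\le\xi_1\le\theta_2\le\cdots\le\xi_a\le\theta_{a+1}$; - $\deg A=\deg B$ and $\xi_1\le\theta_1\le\cdots\le\xi_a\le\theta_a$. By convention $A\prec0$ and $0\prec A$. An interpolatory 1-cube is a pair $(A,B)$ of standard polynomials with only nonpositive zeros and $A\prec B$. A quadruple $(A,B,P,Q)$ is an interpolatory square if, for all $\lambda,\rho>0$, both $(\lambda A+\rho B,\lambda P+\rho Q)$ and $(\lambda B+\rho xA,\lambda Q+\rho xP)$ are interpolatory 1-cubes. *)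

theory Defs
  imports "HOL-Computational_Algebra.Polynomial" Complex_Main
begin

definition standard :: "real poly \<Rightarrow> bool" where
  "standard p \<longleftrightarrow> p = 0 \<or> lead_coeff p > 0"

definition only_real_zeros :: "real poly \<Rightarrow> bool" where
  "only_real_zeros p \<longleftrightarrow>
     (\<forall>z::complex. poly (map_poly complex_of_real p) z = 0 \<longrightarrow> z \<in> \<real>)"

definition only_nonpos_zeros :: "real poly \<Rightarrow> bool" where
  "only_nonpos_zeros p \<longleftrightarrow> p = 0 \<or>
     (\<forall>z::complex. poly (map_poly complex_of_real p) z = 0 \<longrightarrow> z \<in> \<real> \<and> Re z \<le> 0)"

definition zero_list :: "real poly \<Rightarrow> real list \<Rightarrow> bool" where
  "zero_list p xs \<longleftrightarrow> p \<noteq> 0 \<and> sorted xs \<and>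
     p = smult (lead_coeff p) (\<Prod>x\<leftarrow>xs. [:-x, 1:])"

definition interlaces :: "real poly \<Rightarrow> real poly \<Rightarrow> bool" where
  "interlaces A B \<longleftrightarrow> A = 0 \<or> B = 0 \<or>
     (only_real_zeros A \<and> only_real_zeros B \<and>
      (\<exists>xs ys. zero_list A xs \<and> zero_list B ys \<and>
        ((degree B = degree A + 1 \<and>
            (\<forall>i<length xs. ys ! i \<le> xs ! i \<and> xs ! i \<le> ys ! (i + 1))) \<or>
         (degree A = degree B \<and>
            (\<forall>i<length xs. xs ! i \<le> ys ! i \<and>
                (i + 1 < length xs \<longrightarrow> ys ! i \<le> xs ! (i + 1)))))))"

definition interp_1cube :: "real poly \<Rightarrow> real poly \<Rightarrow> bool" where
  "interp_1cube A B \<longleftrightarrow> standard A \<and> standard B \<and>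
     only_nonpos_zeros A \<and> only_nonpos_zeros B \<and> interlaces A B"

definition interp_square :: "real poly \<Rightarrow> real poly \<Rightarrow> real poly \<Rightarrow> real poly \<Rightarrow> bool" where
  "interp_square A B P Q \<longleftrightarrow>
     (\<forall>l r::real. l > 0 \<longrightarrow> r > 0 \<longrightarrow>
        interp_1cube (smult l A + smult r B) (smult l P + smult r Q) \<and>
        interp_1cube (smult l B + smult r ([:0, 1:] * A))
                     (smult l Q + smult r ([:0, 1:] * P)))"

end

theory Submission
  imports Defs "HOL-Computational_Algebra.Fundamental_Theorem_Algebra"
begin

definition pm :: "real multiset \<Rightarrow> real poly" where
  "pm M = (\<Prod>x\<in>#M. [:-x, 1:])"

definition Rc :: "real multiset \<Rightarrow> real \<Rightarrow> nat" where
  "Rc M t = size (filter_mset (\<lambda>z. t \<le> z) M)"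

definition IL :: "real multiset \<Rightarrow> real multiset \<Rightarrow> bool" where
  "IL X Y \<longleftrightarrow> (\<forall>t. Rc X t \<le> Rc Y t \<and> Rc Y t \<le> Rc X t + 1)"

definition rr :: "real poly \<Rightarrow> real multiset \<Rightarrow> bool" where
  "rr p M \<longleftrightarrow> (\<exists>c>0. p = smult c (pm M))"

lemma pm_empty[simp]: "pm {#} = 1" by (simp add: pm_def)
lemma pm_add_mset: "pm (add_mset x M) = [:-x,1:] * pm M" by (simp add: pm_def)
lemma pm_union[simp]: "pm (M + N) = pm M * pm N" by (simp add: pm_def)

lemma degree_pm[simp]: "degree (pm M) = size M"
proof (induction M)
  case (add x M)
  have "degree (pm (add_mset x M)) = degree ([:-x,1:] * pm M)" by (simp only: pm_add_mset)
  also have "\<dots> = degree [:-x,1:] + degree (pm M)"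
    by (rule degree_mult_eq) (auto simp: pm_def)
  finally show ?case using add by simp
qed simp

lemma lead_coeff_pm[simp]: "lead_coeff (pm M) = 1"
proof (induction M)
  case (add x M)
  have "lead_coeff (pm (add_mset x M)) = lead_coeff ([:-x,1:] * pm M)" by (simp only: pm_add_mset)
  also have "\<dots> = lead_coeff [:-x,1:] * lead_coeff (pm M)"
    by (rule lead_coeff_mult)
  finally show ?case using add by simp
qed simp

lemma pm_nonzero[simp]: "pm M \<noteq> 0"
  using lead_coeff_pm[of M] by (metis leading_coeff_0_iff zero_neq_one)

lemma poly_pm: "poly (pm M) t = (\<Prod>z\<in>#M. t - z)"
  by (induction M) (auto simp: pm_add_mset algebra_simps)

lemma poly_pm_zero_iff: "poly (pm M) t = 0 \<longleftrightarrow> t \<in># M"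
  by (induction M) (auto simp: pm_add_mset)

lemma pm_list: "(\<Prod>x\<leftarrow>xs. [:-x, 1:]) = pm (mset xs)"
  by (induction xs) (auto simp: pm_add_mset)

lemma sign_pm:
  assumes "t \<notin># M"
  shows "(-1) ^ size (filter_mset (\<lambda>z. t < z) M) * poly (pm M) t > 0"
  using assms
proof (induction M)
  case empty then show ?case by simp
next
  case (add x M)
  then have IH: "(-1) ^ size (filter_mset (\<lambda>z. t < z) M) * poly (pm M) t > 0" by auto
  from add have "x \<noteq> t" by auto
  show ?case
  proof (cases "t < x")
    case True
    then have "(-1) ^ size (filter_mset (\<lambda>z. t < z) (add_mset x M)) * poly (pm (add_mset x M)) t
      = ((-1) ^ size (filter_mset (\<lambda>z. t < z) M) * poly (pm M) t) * (x - t)"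
      by (simp add: pm_add_mset algebra_simps)
    then show ?thesis using IH True by simp
  next
    case False
    then have "t > x" using \<open>x \<noteq> t\<close> by simp
    then have "(-1) ^ size (filter_mset (\<lambda>z. t < z) (add_mset x M)) * poly (pm (add_mset x M)) t
      = ((-1) ^ size (filter_mset (\<lambda>z. t < z) M) * poly (pm M) t) * (t - x)"
      using False by (simp add: pm_add_mset algebra_simps)
    then show ?thesis using IH \<open>t > x\<close> by (simp add: mult.assoc[symmetric])
  qed
qed

lemma Rc_union[simp]: "Rc (M + N) t = Rc M t + Rc N t"
  by (simp add: Rc_def)

lemma Rc_add_mset: "Rc (add_mset x M) t = Rc M t + (if t \<le> x then 1 else 0)"
  by (simp add: Rc_def)

lemma Rc_mset: "Rc (mset xs) t = card {k. k < length xs \<and> t \<le> xs ! k}"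
  by (simp add: Rc_def length_filter_conv_card flip: mset_filter)

lemma Rs_mset: "size (filter_mset (\<lambda>z. t < z) (mset xs)) = card {k. k < length xs \<and> t < xs ! k}"
  by (simp add: length_filter_conv_card flip: mset_filter)


definition desc :: "real list \<Rightarrow> bool" where
  "desc zs \<longleftrightarrow> (\<forall>i j. i \<le> j \<longrightarrow> j < length zs \<longrightarrow> zs ! j \<le> zs ! i)"

lemma desc_rev: assumes "sorted ys" shows "desc (rev ys)"
  unfolding desc_def
proof (intro allI impI)
  fix i j assume "i \<le> j" "j < length (rev ys)"
  then show "rev ys ! j \<le> rev ys ! i"
    using assms by (simp add: rev_nth sorted_nth_mono)
qed

lemma D_ge:
  assumes "desc zs" "k < length zs" "Rc (mset zs) t \<ge> k + 1"
  shows "t \<le> zs ! k"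
proof (rule ccontr)
  assume "\<not> t \<le> zs ! k"
  have "{j. j < length zs \<and> t \<le> zs ! j} \<subseteq> {..<k}"
  proof
    fix j assume j: "j \<in> {j. j < length zs \<and> t \<le> zs ! j}"
    show "j \<in> {..<k}"
    proof (rule ccontr)
      assume "j \<notin> {..<k}"
      then have "zs ! j \<le> zs ! k" using assms(1) j unfolding desc_def by auto
      then show False using j \<open>\<not> t \<le> zs ! k\<close> by auto
    qed
  qed
  then have "card {j. j < length zs \<and> t \<le> zs ! j} \<le> k"
    by (metis card_lessThan card_mono finite_lessThan)
  then show False using assms(3) by (simp add: Rc_mset)
qed

lemma D_cnt:
  assumes "desc zs" "k < length zs"
  shows "Rc (mset zs) (zs ! k) \<ge> k + 1"
proof -
  have "{..k} \<subseteq> {j. j < length zs \<and> zs ! k \<le> zs ! j}"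
    using assms unfolding desc_def by auto
  then have "card {..k} \<le> card {j. j < length zs \<and> zs ! k \<le> zs ! j}"
    by (intro card_mono) auto
  then show ?thesis by (simp add: Rc_mset)
qed

lemma exists_below: "\<exists>t::real. \<forall>z\<in>#M. t \<le> z"
proof (induction M)
  case (add x M)
  then obtain t where "\<forall>z\<in>#M. t \<le> z" by auto
  then show ?case by (intro exI[of _ "min t x"]) auto
qed simp

lemma Rc_all: "(\<forall>z\<in>#M. t \<le> z) \<Longrightarrow> Rc M t = size M"
  by (induction M) (auto simp: Rc_add_mset Rc_def)

lemma dvd_pm: "distinct zs \<Longrightarrow> (\<forall>z\<in>set zs. poly p z = 0) \<Longrightarrow> pm (mset zs) dvd p"
proof (induction zs arbitrary: p)
  case Nil then show ?case by simp
next
  case (Cons z zs)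
  then have "[:-z,1:] dvd p" by (simp add: poly_eq_0_iff_dvd)
  then obtain q where q: "p = [:-z,1:] * q" by (elim dvdE)
  have "\<forall>w\<in>set zs. poly q w = 0"
  proof
    fix w assume "w \<in> set zs"
    then have "poly p w = 0" "w \<noteq> z" using Cons.prems by auto
    then show "poly q w = 0" using q by simp
  qed
  then have "pm (mset zs) dvd q" using Cons by auto
  then show ?case using q by (metis mset.simps(2) pm_add_mset mult_dvd_mono dvd_refl)
qed

lemma sum_deg:
  fixes p q :: "real poly"
  assumes "lead_coeff p > 0" "lead_coeff q > 0" "degree p \<le> degree q"
  shows "degree (p + q) = degree q \<and> lead_coeff (p + q) > 0"
proof (cases "degree p < degree q")
  case True
  then show ?thesis using assms by (simp add: degree_add_eq_right lead_coeff_add_le coeff_eq_0)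
next
  case False
  then have eq: "degree p = degree q" using assms by simp
  have c: "coeff (p + q) (degree q) > 0" using assms eq by simp
  then have "degree q \<le> degree (p + q)" by (intro le_degree) simp
  moreover have "degree (p + q) \<le> degree q" using eq by (metis degree_add_le order_refl)
  ultimately have "degree (p + q) = degree q" by simp
  then show ?thesis using c by simp
qed

lemma CNT:
  assumes "length xs \<le> length zs" "\<forall>k<length xs. xs ! k \<le> zs ! k"
  shows "Rc (mset xs) t \<le> Rc (mset zs) t"
proof -
  have "{k. k < length xs \<and> t \<le> xs ! k} \<subseteq> {k. k < length zs \<and> t \<le> zs ! k}"
    using assms by (auto intro: order_trans)
  then show ?thesis unfolding Rc_mset by (intro card_mono) auto
qed


lemma FL_s:
  fixes X Y :: "real multiset" and a b :: real
  assumes a: "a > 0" and b: "b > 0"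
    and disj: "\<And>z. z \<in># X \<Longrightarrow> z \<in># Y \<Longrightarrow> False"
    and il: "IL X Y"
  shows "\<exists>Z c. c > 0 \<and> smult a (pm X) + smult b (pm Y) = smult c (pm Z) \<and>
           (\<forall>t. Rc X t \<le> Rc Z t \<and> Rc Z t \<le> Rc Y t)"
proof -
  define xs where "xs = rev (sorted_list_of_multiset X)"
  define ys where "ys = rev (sorted_list_of_multiset Y)"
  define n where "n = length xs"
  define m where "m = length ys"
  have mx: "mset xs = X" and my: "mset ys = Y" by (simp_all add: xs_def ys_def)
  have dx: "desc xs" and dy: "desc ys" unfolding xs_def ys_def by (simp_all add: desc_rev)
  have ilx: "Rc (mset xs) t \<le> Rc (mset ys) t" "Rc (mset ys) t \<le> Rc (mset xs) t + 1" for t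
    using il mx my unfolding IL_def by auto
  have nm: "n \<le> m \<and> m \<le> n + 1"
  proof -
    obtain t0 where t0: "\<forall>z\<in>#X+Y. t0 \<le> z" using exists_below by blast
    have "Rc (mset xs) t0 = size (mset xs)" by (rule Rc_all) (use t0 mx in auto)
    moreover have "Rc (mset ys) t0 = size (mset ys)" by (rule Rc_all) (use t0 my in auto)
    ultimately have "Rc (mset xs) t0 = n" "Rc (mset ys) t0 = m" by (simp_all add: n_def m_def)
    then show ?thesis using ilx[of t0] by simp
  qed
  have inX: "xs ! k \<in># X" if "k < n" for k using that mx n_def by (metis nth_mem set_mset_mset)
  have inY: "ys ! k \<in># Y" if "k < m" for k using that my m_def by (metis nth_mem set_mset_mset)
  have lt1: "xs ! k < ys ! k" if k: "k < n" for k
  proof -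
    have "Rc (mset xs) (xs ! k) \<ge> k + 1" using D_cnt dx k n_def by blast
    then have "Rc (mset ys) (xs ! k) \<ge> k + 1" using ilx order_trans by blast
    then have "xs ! k \<le> ys ! k" using D_ge dy k nm m_def by simp
    moreover have "xs ! k \<noteq> ys ! k" using disj inX inY k nm by force
    ultimately show ?thesis by simp
  qed
  have lt2: "ys ! (k+1) < xs ! k" if k: "k < n" "k + 1 < m" for k
  proof -
    have "Rc (mset ys) (ys ! (k+1)) \<ge> k + 2" using D_cnt dy k m_def by fastforce
    then have "Rc (mset xs) (ys ! (k+1)) \<ge> k + 1" using ilx[of "ys ! (k+1)"] by linarith
    then have "ys ! (k+1) \<le> xs ! k" using D_ge dx k n_def by simp
    moreover have "xs ! k \<noteq> ys ! (k+1)" using disj inX inY k by force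
    ultimately show ?thesis by simp
  qed
  have sY: "(-1)^(k+1) * poly (pm Y) (xs!k) > 0" if k: "k < n" for k
  proof -
    have "{j. j < m \<and> xs ! k < ys ! j} = {..k}"
    proof (intro set_eqI iffI)
      fix j assume "j \<in> {j. j < m \<and> xs ! k < ys ! j}"
      then have j: "j < m" "xs ! k < ys ! j" by auto
      show "j \<in> {..k}"
      proof (rule ccontr)
        assume "j \<notin> {..k}"
        then have "ys ! j \<le> ys ! (k+1)" using dy j unfolding desc_def m_def by auto
        then show False using lt2[of k] k j by (smt (verit) Suc_eq_plus1 Suc_leI \<open>j \<notin> {..k}\<close> atMost_iff leI le_less_trans)
      qed
    next
      fix j assume "j \<in> {..k}"
      then have "j \<le> k" by simp
      then have "ys ! k \<le> ys ! j" using dy k nm unfolding desc_def m_def by auto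
      then show "j \<in> {j. j < m \<and> xs ! k < ys ! j}" using lt1[OF k] \<open>j \<le> k\<close> k nm by auto
    qed
    then have "size (filter_mset (\<lambda>z. xs!k < z) Y) = k + 1"
      using Rs_mset[of "xs!k" ys] my m_def by simp
    moreover have "xs ! k \<notin># Y" using disj inX k by blast
    ultimately show ?thesis using sign_pm[of "xs!k" Y] by simp
  qed
  have sX: "(-1)^k * poly (pm X) (ys!k) > 0" if k: "k < m" "k \<le> n" for k
  proof -
    have "{j. j < n \<and> ys ! k < xs ! j} = {..<k}"
    proof (intro set_eqI iffI)
      fix j assume "j \<in> {j. j < n \<and> ys ! k < xs ! j}"
      then have j: "j < n" "ys ! k < xs ! j" by auto
      show "j \<in> {..<k}"
      proof (rule ccontr)
        assume "j \<notin> {..<k}"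
        then have "xs ! j \<le> xs ! k" "k < n" using dx j unfolding desc_def n_def by auto
        then show False using lt1[of k] j by simp
      qed
    next
      fix j assume "j \<in> {..<k}"
      then have "j < k" by simp
      then have "xs ! (k - 1) \<le> xs ! j" using dx k unfolding desc_def n_def by auto
      moreover have "ys ! k < xs ! (k - 1)" using lt2[of "k-1"] \<open>j < k\<close> k by simp
      ultimately show "j \<in> {j. j < n \<and> ys ! k < xs ! j}" using \<open>j < k\<close> k by auto
    qed
    then have "size (filter_mset (\<lambda>z. ys!k < z) X) = k"
      using Rs_mset[of "ys!k" xs] mx n_def by simp
    moreover have "ys ! k \<notin># X" using disj inY k by blast
    ultimately show ?thesis using sign_pm[of "ys!k" X] by simp
  qed
  define G where "G = smult a (pm X) + smult b (pm Y)"
  have root: "\<exists>x. xs!k < x \<and> x < ys!k \<and> poly G x = 0" if k: "k < n" for k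
  proof -
    have g1: "poly G (xs!k) = b * poly (pm Y) (xs!k)"
      using inX[OF k] by (simp add: G_def poly_pm_zero_iff)
    have g2: "poly G (ys!k) = a * poly (pm X) (ys!k)"
      using inY[of k] k nm by (simp add: G_def poly_pm_zero_iff)
    have u: "(-1)^k * poly (pm Y) (xs!k) < 0" using sY[OF k] by simp
    have v: "(-1)^k * poly (pm X) (ys!k) > 0" using sX[of k] k nm by simp
    have "((-1)^k * poly (pm Y) (xs!k)) * ((-1)^k * poly (pm X) (ys!k)) < 0"
      using mult_neg_pos[OF u v] .
    moreover have "(-1::real)^k * (-1)^k = 1" by (simp flip: power_mult_distrib)
    moreover have "((-1)^k * poly (pm Y) (xs!k)) * ((-1)^k * poly (pm X) (ys!k))
       = ((-1::real)^k * (-1)^k) * (poly (pm Y) (xs!k) * poly (pm X) (ys!k))" by (simp only: mult_ac)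
    ultimately have "poly (pm Y) (xs!k) * poly (pm X) (ys!k) < 0" by simp
    have "poly G (xs!k) * poly G (ys!k) < 0"
    proof -
      have "poly G (xs!k) * poly G (ys!k) = (a * b) * (poly (pm Y) (xs!k) * poly (pm X) (ys!k))"
        unfolding g1 g2 by (simp only: mult_ac)
      then show ?thesis using a b \<open>poly (pm Y) (xs!k) * poly (pm X) (ys!k) < 0\<close>
        by (simp add: mult_pos_neg)
    qed
    then show ?thesis using poly_IVT[OF lt1[OF k]] by auto
  qed
  then obtain f where f: "\<And>k. k < n \<Longrightarrow> xs!k < f k \<and> f k < ys!k \<and> poly G (f k) = 0"
    by metis
  define fs where "fs = map f [0..<n]"
  have lfs: "length fs = n" by (simp add: fs_def)
  have fs_nth: "fs ! k = f k" if "k < n" for k using that by (simp add: fs_def)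
  have fdec: "f k < f j" if jk: "j < k" "k < n" for j k
  proof -
    have "f k < ys ! k" using f jk by auto
    also have "ys ! k \<le> ys ! (j+1)" using dy jk nm unfolding desc_def m_def by auto
    also have "\<dots> < xs ! j" using lt2[of j] jk nm by simp
    also have "\<dots> < f j" using f jk by auto
    finally show ?thesis .
  qed
  have dist: "distinct fs"
    unfolding distinct_conv_nth lfs
    by (metis fdec fs_nth linorder_neqE_nat order_less_irrefl)
  have "pm (mset fs) dvd G"
    by (rule dvd_pm[OF dist]) (auto simp: fs_def f)
  then obtain Q0 where GQ: "G = pm (mset fs) * Q0" by (elim dvdE)
  have l1: "lead_coeff (smult a (pm X)) > 0" "lead_coeff (smult b (pm Y)) > 0"
    using a b by (simp_all only: lead_coeff_smult lead_coeff_pm mult_1_right)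
  have d1: "degree (smult a (pm X)) = n" "degree (smult b (pm Y)) = m"
    using a b mx my n_def m_def by auto
  have dlc: "degree G = m \<and> lead_coeff G > 0"
  proof -
    have "degree (smult a (pm X)) \<le> degree (smult b (pm Y))" using d1 nm by simp
    from sum_deg[OF l1 this] show ?thesis unfolding G_def using d1(2) by metis
  qed
  then have "G \<noteq> 0" by auto
  then have Q0nz: "Q0 \<noteq> 0" using GQ by auto
  have "n + degree Q0 = m" using dlc GQ Q0nz lfs by (simp add: degree_mult_eq)
  then have dQ: "degree Q0 = m - n" by linarith
  have "lead_coeff G = lead_coeff (pm (mset fs)) * lead_coeff Q0" by (simp only: GQ lead_coeff_mult)
  then have lQ: "lead_coeff Q0 > 0" using dlc by (metis lead_coeff_pm mult_1)
  show ?thesis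
  proof (cases "m = n")
    case True
    then have "degree Q0 = 0" using dQ by simp
    then obtain c where c: "Q0 = [:c:]" by (elim degree_eq_zeroE)
    then have "c > 0" using lQ by simp
    have "G = smult c (pm (mset fs))" using GQ c by simp
    moreover have "Rc X t \<le> Rc (mset fs) t" for t
      unfolding mx[symmetric] by (rule CNT) (use lfs f fs_nth n_def in \<open>auto intro: less_imp_le\<close>)
    moreover have "Rc (mset fs) t \<le> Rc Y t" for t
      unfolding my[symmetric] by (rule CNT) (use lfs f fs_nth True m_def n_def in \<open>auto intro: less_imp_le\<close>)
    ultimately show ?thesis using \<open>c > 0\<close> unfolding G_def by blast
  next
    case False
    then have mn: "m = n + 1" using nm by simp
    define q1 where "q1 = coeff Q0 1"
    define e where "e = - coeff Q0 0 / q1"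
    have dQ1: "degree Q0 = 1" using dQ mn by simp
    then have "q1 > 0" using lQ by (simp add: q1_def)
    have Qe: "Q0 = smult q1 [:-e, 1:]"
    proof (rule poly_eqI)
      fix i
      show "coeff Q0 i = coeff (smult q1 [:-e, 1:]) i"
        using \<open>q1 > 0\<close> dQ1
        by (cases i) (auto simp: e_def q1_def coeff_pCons coeff_eq_0 split: nat.split)
    qed
    have GZ: "G = smult q1 (pm (add_mset e (mset fs)))"
      using GQ Qe by (metis mult.commute mult_smult_left pm_add_mset)
    define y where "y = ys ! n"
    have yY: "y \<in># Y" using inY[of n] mn by (simp add: y_def)
    have yX: "y \<notin># X" using disj yY by blast
    have fy: "y < f k" if "k < n" for k
    proof -
      have "y \<le> ys ! (k+1)" using dy that mn unfolding desc_def m_def y_def by auto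
      also have "\<dots> < xs ! k" using lt2[of k] that mn by simp
      also have "\<dots> < f k" using f that by auto
      finally show ?thesis .
    qed
    have "{j. j < length fs \<and> y < fs ! j} = {..<n}" using fy lfs fs_nth by auto
    then have "size (filter_mset (\<lambda>z. y < z) (mset fs)) = n" using Rs_mset[of y fs] by simp
    moreover have "y \<notin># mset fs" using fy lfs fs_nth by (auto simp: in_set_conv_nth)
    ultimately have u: "(-1)^n * poly (pm (mset fs)) y > 0" using sign_pm[of y "mset fs"] by simp
    have "poly G y = a * poly (pm X) y" using yY by (simp add: G_def poly_pm_zero_iff)
    then have "(-1)^n * poly G y > 0" using sX[of n] mn a y_def
      by (simp add: mult.left_commute)
    moreover have "(-1)^n * poly G y = ((-1)^n * poly (pm (mset fs)) y) * poly Q0 y"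
      using GQ by simp
    ultimately have "poly Q0 y > 0" using u by (metis zero_less_mult_pos)
    then have "e < y" using Qe \<open>q1 > 0\<close> by (simp add: zero_less_mult_iff)
    define zs where "zs = fs @ [e]"
    have mz: "mset zs = add_mset e (mset fs)" by (simp add: zs_def)
    have lzs: "length zs = m" using lfs mn by (simp add: zs_def)
    have zs1: "zs ! k = f k" if "k < n" for k using that lfs fs_nth by (simp add: zs_def nth_append)
    have zs2: "zs ! n = e" using lfs by (simp add: zs_def nth_append)
    have "Rc X t \<le> Rc (mset zs) t" for t
      unfolding mx[symmetric] by (rule CNT) (use lzs f zs1 nm n_def m_def in \<open>auto intro: less_imp_le\<close>)
    moreover have "Rc (mset zs) t \<le> Rc Y t" for t
      unfolding my[symmetric]
    proof (rule CNT)
      show "length zs \<le> length ys" using lzs m_def by simp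
      show "\<forall>k<length zs. zs ! k \<le> ys ! k"
      proof (intro allI impI)
        fix k assume "k < length zs"
        then have "k < n \<or> k = n" using lzs mn by auto
        then show "zs ! k \<le> ys ! k"
          using zs1 zs2 f \<open>e < y\<close> y_def by (auto intro: less_imp_le)
      qed
    qed
    ultimately show ?thesis using \<open>q1 > 0\<close> GZ mz unfolding G_def by metis
  qed
qed


lemma FL:
  fixes X Y :: "real multiset" and a b :: real
  assumes a: "a > 0" and b: "b > 0" and il: "IL X Y"
  shows "\<exists>Z c. c > 0 \<and> smult a (pm X) + smult b (pm Y) = smult c (pm Z) \<and>
           (\<forall>t. Rc X t \<le> Rc Z t \<and> Rc Z t \<le> Rc Y t)"
proof -
  define G where "G = X \<inter># Y"
  define X' where "X' = X - G"
  define Y' where "Y' = Y - G"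
  have X: "X = G + X'" unfolding X'_def G_def
    by (metis subset_mset.add_diff_inverse subset_mset.inf.cobounded1)
  have Y: "Y = G + Y'" unfolding Y'_def G_def
    by (metis subset_mset.add_diff_inverse subset_mset.inf.cobounded2)
  have disj: "\<And>z. z \<in># X' \<Longrightarrow> z \<in># Y' \<Longrightarrow> False"
    unfolding X'_def Y'_def G_def by (auto simp: in_diff_count)
  have il': "IL X' Y'" unfolding IL_def
  proof
    fix t
    have "Rc X t \<le> Rc Y t \<and> Rc Y t \<le> Rc X t + 1" using il unfolding IL_def by blast
    then show "Rc X' t \<le> Rc Y' t \<and> Rc Y' t \<le> Rc X' t + 1"
      by (subst (asm) (1 2) X, subst (asm) (1 2) Y) simp
  qed
  obtain Z' c where c: "c > 0" and eq: "smult a (pm X') + smult b (pm Y') = smult c (pm Z')"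
    and cnt: "\<forall>t. Rc X' t \<le> Rc Z' t \<and> Rc Z' t \<le> Rc Y' t"
  proof -
    have "\<exists>Z c. c > 0 \<and> smult a (pm X') + smult b (pm Y') = smult c (pm Z) \<and>
           (\<forall>t. Rc X' t \<le> Rc Z t \<and> Rc Z t \<le> Rc Y' t)"
      by (rule FL_s[of a b X' Y']) (use a b disj il' in auto)
    then show ?thesis using that by blast
  qed
  have "smult a (pm X) + smult b (pm Y) = pm G * (smult a (pm X') + smult b (pm Y'))"
    by (subst X, subst Y) (simp add: algebra_simps)
  also have "\<dots> = smult c (pm (G + Z'))" using eq by simp
  finally show ?thesis using c cnt X Y by (intro exI[of _ "G + Z'"] exI[of _ c]) auto
qed

lemma Rc_pos: "z \<in># M \<Longrightarrow> t \<le> z \<Longrightarrow> Rc M t > 0"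
proof -
  assume "z \<in># M" "t \<le> z"
  then have "z \<in># filter_mset (\<lambda>z. t \<le> z) M" by simp
  then show ?thesis unfolding Rc_def by (metis empty_iff set_mset_empty neq0_conv size_eq_0_iff_empty)
qed

lemma Rc_zero: "(\<forall>z\<in>#M. z < t) \<Longrightarrow> Rc M t = 0"
  by (induction M) (auto simp: Rc_add_mset Rc_def)

lemma nonpos_Rc: assumes "\<forall>t>0. Rc M t \<le> Rc N t" "\<forall>z\<in>#N. z \<le> 0" shows "\<forall>z\<in>#M. z \<le> (0::real)"
proof
  fix z assume z: "z \<in># M"
  show "z \<le> 0"
  proof (rule ccontr)
    assume "\<not> z \<le> 0"
    then have "Rc N z = 0" using assms(2) by (intro Rc_zero) force
    moreover have "Rc M z > 0" using Rc_pos[OF z] by simp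
    moreover have "Rc M z \<le> Rc N z" using assms(1) \<open>\<not> z \<le> 0\<close> by simp
    ultimately show False by linarith
  qed
qed

lemma IL_x:
  assumes "IL X Y" "\<forall>z\<in>#Y. z \<le> (0::real)"
  shows "IL Y (add_mset 0 X)"
  unfolding IL_def
proof
  fix t
  show "Rc Y t \<le> Rc (add_mset 0 X) t \<and> Rc (add_mset 0 X) t \<le> Rc Y t + 1"
  proof (cases "t \<le> 0")
    case True then show ?thesis using assms(1) unfolding IL_def by (simp add: Rc_add_mset)
  next
    case False
    then have "Rc Y t = 0" using assms(2) by (intro Rc_zero) force
    moreover have "Rc X t = 0" using assms(1) \<open>Rc Y t = 0\<close> unfolding IL_def by (metis le_zero_eq)
    ultimately show ?thesis using False by (simp add: Rc_add_mset)
  qed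
qed

lemma rr_smult: "rr p M \<Longrightarrow> l > 0 \<Longrightarrow> rr (smult l p) M"
proof -
  assume "rr p M" "l > 0"
  then obtain c where "c > 0" "p = smult c (pm M)" unfolding rr_def by auto
  then show ?thesis unfolding rr_def using \<open>l > 0\<close> by (intro exI[of _ "l * c"]) auto
qed

lemma rr_x: "rr p M \<Longrightarrow> rr ([:0,1:] * p) (add_mset 0 M)"
  unfolding rr_def by (auto simp: pm_add_mset)

lemma M_core:
  fixes l r :: real
  assumes l: "l > 0" and r: "r > 0" and A: "rr A X" and B: "rr B Y" and il: "IL X Y"
    and nX: "\<forall>z\<in>#X. z \<le> 0" and nY: "\<forall>z\<in>#Y. z \<le> 0"
  shows "\<exists>Z W. rr (smult l A + smult r B) Z \<and> rr (smult l B + smult r ([:0,1:] * A)) W \<and>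
           IL Z W \<and> (\<forall>z\<in>#Z. z \<le> 0) \<and> (\<forall>z\<in>#W. z \<le> 0)"
proof -
  obtain a where a: "a > 0" "A = smult a (pm X)" using A rr_def by auto
  obtain b where b: "b > 0" "B = smult b (pm Y)" using B rr_def by auto
  have xA: "[:0,1:] * A = smult a (pm (add_mset 0 X))" using a by (simp add: pm_add_mset)
  have il2: "IL Y (add_mset 0 X)" using IL_x[OF il nY] .
  obtain Z c where c: "c > 0" "smult (l*a) (pm X) + smult (r*b) (pm Y) = smult c (pm Z)"
    and cZ: "\<forall>t. Rc X t \<le> Rc Z t \<and> Rc Z t \<le> Rc Y t"
    using FL[OF _ _ il, of "l*a" "r*b"] l r a b by auto
  obtain W d where d: "d > 0" "smult (l*b) (pm Y) + smult (r*a) (pm (add_mset 0 X)) = smult d (pm W)"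
    and cW: "\<forall>t. Rc Y t \<le> Rc W t \<and> Rc W t \<le> Rc (add_mset 0 X) t"
    using FL[OF _ _ il2, of "l*b" "r*a"] l r a b by auto
  have "rr (smult l A + smult r B) Z" unfolding rr_def using c a b by auto
  moreover have "rr (smult l B + smult r ([:0,1:] * A)) W" unfolding rr_def using d xA b by auto
  moreover have "IL Z W" unfolding IL_def
  proof
    fix t
    have "Rc (add_mset 0 X) t \<le> Rc X t + 1" by (simp add: Rc_add_mset)
    then show "Rc Z t \<le> Rc W t \<and> Rc W t \<le> Rc Z t + 1"
      using cZ cW by (meson add_le_mono1 order_trans)
  qed
  moreover have "\<forall>z\<in>#Z. z \<le> 0" using nonpos_Rc[of Z Y] cZ nY by blast
  moreover have "\<forall>z\<in>#W. z \<le> 0"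
  proof (rule nonpos_Rc[of W "add_mset 0 X"])
    show "\<forall>t>0. Rc W t \<le> Rc (add_mset 0 X) t" using cW by blast
    show "\<forall>z\<in>#add_mset 0 X. z \<le> 0" using nX by simp
  qed
  ultimately show ?thesis by blast
qed

lemma map_of_real_mult: "map_poly complex_of_real (p * q) = map_poly complex_of_real p * map_poly complex_of_real q"
  by (rule poly_eqI) (simp add: coeff_map_poly coeff_mult)
lemma poly_map_of_real: "poly (map_poly complex_of_real p) (of_real x) = of_real (poly p x)"
  by (induction p) (auto simp: map_poly_pCons)
lemma map_lin: "map_poly complex_of_real [:-z,1:] = [:-of_real z, 1:]"
  by (simp add: map_poly_pCons)

lemma poly_map_pm: "poly (map_poly complex_of_real (pm Z)) w = (\<Prod>z\<in>#Z. w - of_real z)"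
proof (induction Z)
  case (add x Z)
  have "map_poly complex_of_real (pm (add_mset x Z)) = [:-of_real x, 1:] * map_poly complex_of_real (pm Z)"
    by (simp only: pm_add_mset map_of_real_mult map_lin)
  then have "poly (map_poly complex_of_real (pm (add_mset x Z))) w
     = poly [:-of_real x, 1:] w * poly (map_poly complex_of_real (pm Z)) w"
    by (simp only: poly_mult)
  also have "\<dots> = (w - of_real x) * (\<Prod>z\<in>#Z. w - of_real z)" using add by simp
  finally show ?case by simp
qed (simp add: pm_def)

lemma roots_pm:
  assumes "poly (map_poly complex_of_real (smult c (pm Z))) w = 0" "c \<noteq> 0"
  shows "\<exists>z\<in>#Z. w = of_real z"
proof -
  have "map_poly complex_of_real (smult c (pm Z)) = smult (of_real c) (map_poly complex_of_real (pm Z))"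
    by (rule map_poly_smult) auto
  then have "of_real c * (\<Prod>z\<in>#Z. w - of_real z) = 0" using assms by (simp add: poly_map_pm)
  then have "(\<Prod>z\<in>#Z. w - of_real z) = 0" using assms(2) by simp
  then show ?thesis by (auto simp: prod_mset_zero_iff)
qed

lemma rr_props:
  assumes "rr p Z" "\<forall>z\<in>#Z. z \<le> 0"
  shows "p \<noteq> 0" "standard p" "only_nonpos_zeros p" "only_real_zeros p"
    "degree p = size Z" "p = smult (lead_coeff p) (pm Z)"
proof -
  obtain c where c: "c > 0" "p = smult c (pm Z)" using assms(1) rr_def by auto
  show "p \<noteq> 0" using c by simp
  have lc: "lead_coeff p = c" using c by (simp only: lead_coeff_smult lead_coeff_pm mult_1_right)
  show "standard p" using lc c standard_def by simp
  show "only_nonpos_zeros p" unfolding only_nonpos_zeros_def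
    using roots_pm[of c Z] c assms(2) by force
  show "only_real_zeros p" unfolding only_real_zeros_def
    using roots_pm[of c Z] c by force
  show "degree p = size Z" using c by simp
  show "p = smult (lead_coeff p) (pm Z)" using c lc by simp
qed

lemma nonpos_of:
  assumes "only_nonpos_zeros p" "p = smult c (pm Y)" "c \<noteq> 0"
  shows "\<forall>z\<in>#Y. z \<le> 0"
proof
  fix z assume "z \<in># Y"
  then have "poly p z = 0" using assms(2) by (simp add: poly_pm_zero_iff)
  then have "poly (map_poly complex_of_real p) (of_real z) = 0" by (simp add: poly_map_of_real)
  moreover have "p \<noteq> 0" using assms(2,3) by simp
  ultimately have "Re (of_real z) \<le> 0" using assms(1) unfolding only_nonpos_zeros_def by blast
  then show "z \<le> 0" by simp
qed

lemma fta_real: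
  assumes "p \<noteq> 0" "only_real_zeros p"
  shows "\<exists>Y. p = smult (lead_coeff p) (pm Y)"
  using assms
proof (induction "degree p" arbitrary: p rule: less_induct)
  case less
  show ?case
  proof (cases "degree p = 0")
    case True
    then obtain c where "p = [:c:]" by (elim degree_eq_zeroE)
    then show ?thesis by (intro exI[of _ "{#}"]) simp
  next
    case False
    have "degree (map_poly complex_of_real p) = degree p" by (rule degree_map_poly) auto
    then have "\<not> constant (poly (map_poly complex_of_real p))" using False by (simp add: constant_degree)
    then obtain w where w: "poly (map_poly complex_of_real p) w = 0"
      using fundamental_theorem_of_algebra by blast
    then have "w \<in> \<real>" using less.prems unfolding only_real_zeros_def by blast
    then obtain x where x: "w = of_real x" by (elim Reals_cases)
    then have "poly p x = 0" using w by (simp add: poly_map_of_real)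
    then have "[:-x,1:] dvd p" by (simp add: poly_eq_0_iff_dvd)
    then obtain q where q: "p = [:-x,1:] * q" by (elim dvdE)
    have qnz: "q \<noteq> 0" using q less.prems by auto
    have "degree ([:-x,1:] * q) = degree [:-x,1:] + degree q" by (rule degree_mult_eq) (use qnz in auto)
    then have dq: "degree p = degree q + 1" using q by simp
    have "only_real_zeros q" unfolding only_real_zeros_def
    proof (intro allI impI)
      fix z assume "poly (map_poly complex_of_real q) z = 0"
      moreover have "poly (map_poly complex_of_real p) z = poly (map_poly complex_of_real [:-x,1:]) z * poly (map_poly complex_of_real q) z"
        by (simp only: q map_of_real_mult poly_mult)
      ultimately have "poly (map_poly complex_of_real p) z = 0" by simp
      then show "z \<in> \<real>" using less.prems unfolding only_real_zeros_def by blast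
    qed
    then obtain Y where Y: "q = smult (lead_coeff q) (pm Y)" using less.hyps[of q] dq qnz by auto
    have "lead_coeff p = lead_coeff [:-x,1:] * lead_coeff q" by (simp only: q lead_coeff_mult)
    then have "lead_coeff p = lead_coeff q" by simp
    then have "p = smult (lead_coeff p) (pm (add_mset x Y))"
      using q Y by (metis mult_smult_right pm_add_mset)
    then show ?thesis by blast
  qed
qed

lemma rr_of:
  assumes "p \<noteq> 0" "standard p" "only_nonpos_zeros p"
  shows "\<exists>Y. rr p Y \<and> (\<forall>z\<in>#Y. z \<le> 0)"
proof -
  have "only_real_zeros p" using assms unfolding only_nonpos_zeros_def only_real_zeros_def by auto
  then obtain Y where Y: "p = smult (lead_coeff p) (pm Y)" using fta_real assms(1) by blast
  have "lead_coeff p > 0" using assms standard_def by auto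
  then have "rr p Y" using Y rr_def by blast
  moreover have "\<forall>z\<in>#Y. z \<le> 0" using nonpos_of[OF assms(3) Y] assms(1) by simp
  ultimately show ?thesis by blast
qed


lemma card_le_Suc: "finite S \<Longrightarrow> card (insert x S) \<le> card S + 1"
  by (simp add: card_insert_if)

lemma IL_of_idx:
  assumes "(length ys = length xs + 1 \<and> (\<forall>i<length xs. ys!i \<le> xs!i \<and> xs!i \<le> ys!(i+1))) \<or>
           (length xs = length ys \<and> (\<forall>i<length xs. xs!i \<le> ys!i \<and> (i+1 < length xs \<longrightarrow> ys!i \<le> xs!(i+1))))"
  shows "IL (mset xs) (mset ys)"
  unfolding IL_def Rc_mset
proof
  fix t
  define n where "n = length xs"
  define S where "S = {k. k < length xs \<and> t \<le> xs ! k}"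
  define T where "T = {k. k < length ys \<and> t \<le> ys ! k}"
  have fS: "finite S" "finite T" by (auto simp: S_def T_def)
  show "card S \<le> card T \<and> card T \<le> card S + 1"
    unfolding S_def[symmetric] T_def[symmetric]
    using assms
  proof
    assume U: "length ys = length xs + 1 \<and> (\<forall>i<length xs. ys!i \<le> xs!i \<and> xs!i \<le> ys!(i+1))"
    have "Suc ` S \<subseteq> T" using U by (auto simp: S_def T_def intro: order_trans)
    then have "card (Suc ` S) \<le> card T" using fS by (intro card_mono) auto
    then have 1: "card S \<le> card T" by (simp add: card_image)
    have "T \<subseteq> insert n S"
    proof
      fix k assume "k \<in> T"
      then show "k \<in> insert n S" using U by (cases "k = n") (auto simp: S_def T_def n_def intro: order_trans)
    qed
    then have "card T \<le> card (insert n S)" using fS by (intro card_mono) auto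
    then have "card T \<le> card S + 1" using card_le_Suc[OF fS(1), of n] by linarith
    then show ?thesis using 1 by simp
  next
    assume E: "length xs = length ys \<and> (\<forall>i<length xs. xs!i \<le> ys!i \<and> (i+1 < length xs \<longrightarrow> ys!i \<le> xs!(i+1)))"
    have "S \<subseteq> T" using E by (auto simp: S_def T_def intro: order_trans)
    then have 1: "card S \<le> card T" using fS by (intro card_mono) auto
    have "T \<subseteq> insert (n - 1) ((\<lambda>k. k - 1) ` S)"
    proof
      fix k assume k: "k \<in> T"
      show "k \<in> insert (n - 1) ((\<lambda>k. k - 1) ` S)"
      proof (cases "k + 1 < n")
        case True
        then have "k + 1 \<in> S" using E k by (auto simp: S_def T_def n_def intro: order_trans)
        then show ?thesis by (intro insertI2 image_eqI[of _ _ "k+1"]) auto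
      next
        case False
        then show ?thesis using k E by (auto simp: T_def n_def)
      qed
    qed
    then have "card T \<le> card (insert (n - 1) ((\<lambda>k. k - 1) ` S))" using fS by (intro card_mono) auto
    also have "\<dots> \<le> card ((\<lambda>k. k - 1) ` S) + 1" using fS by (intro card_le_Suc) auto
    also have "\<dots> \<le> card S + 1" using card_image_le[OF fS(1)] by simp
    finally show ?thesis using 1 by simp
  qed
qed

lemma A1: "sorted zs \<Longrightarrow> i < length zs \<Longrightarrow> Rc (mset zs) (zs ! i) \<ge> length zs - i"
proof -
  assume a: "sorted zs" "i < length zs"
  have "{i..<length zs} \<subseteq> {k. k < length zs \<and> zs ! i \<le> zs ! k}"
    using a by (auto simp: sorted_nth_mono)
  then have "card {i..<length zs} \<le> card {k. k < length zs \<and> zs ! i \<le> zs ! k}"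
    by (intro card_mono) auto
  then show ?thesis by (simp add: Rc_mset)
qed

lemma A2: "sorted zs \<Longrightarrow> i < length zs \<Longrightarrow> zs ! i < t \<Longrightarrow> Rc (mset zs) t \<le> length zs - i - 1"
proof -
  assume a: "sorted zs" "i < length zs" "zs ! i < t"
  have "{k. k < length zs \<and> t \<le> zs ! k} \<subseteq> {i+1..<length zs}"
  proof
    fix k assume k: "k \<in> {k. k < length zs \<and> t \<le> zs ! k}"
    have "\<not> k \<le> i"
    proof
      assume "k \<le> i"
      then have "zs ! k \<le> zs ! i" using a by (simp add: sorted_nth_mono)
      then show False using k a by auto
    qed
    then show "k \<in> {i+1..<length zs}" using k by auto
  qed
  then have "card {k. k < length zs \<and> t \<le> zs ! k} \<le> card {i+1..<length zs}"
    by (intro card_mono) auto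
  then show ?thesis by (simp add: Rc_mset)
qed

lemma idx_of_IL:
  assumes sx: "sorted xs" and sy: "sorted ys" and il: "IL (mset xs) (mset ys)"
  shows "(length ys = length xs + 1 \<and> (\<forall>i<length xs. ys!i \<le> xs!i \<and> xs!i \<le> ys!(i+1))) \<or>
           (length xs = length ys \<and> (\<forall>i<length xs. xs!i \<le> ys!i \<and> (i+1 < length xs \<longrightarrow> ys!i \<le> xs!(i+1))))"
proof -
  define n where "n = length xs"
  define m where "m = length ys"
  have c1: "Rc (mset xs) t \<le> Rc (mset ys) t" and c2: "Rc (mset ys) t \<le> Rc (mset xs) t + 1" for t
    using il unfolding IL_def by auto
  obtain t0 where t0: "\<forall>z\<in># mset xs + mset ys. t0 \<le> z" using exists_below by blast
  have "Rc (mset xs) t0 = size (mset xs)" by (rule Rc_all) (use t0 in auto)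
  moreover have "Rc (mset ys) t0 = size (mset ys)" by (rule Rc_all) (use t0 in auto)
  ultimately have nm: "n \<le> m" "m \<le> n + 1" using c1[of t0] c2[of t0] by (auto simp: n_def m_def)
  show ?thesis
  proof (cases "m = n")
    case True
    have "xs!i \<le> ys!i \<and> (i+1 < n \<longrightarrow> ys!i \<le> xs!(i+1))" if i: "i < n" for i
    proof
      show "xs!i \<le> ys!i"
      proof (rule ccontr)
        assume "\<not> xs!i \<le> ys!i"
        then have "Rc (mset ys) (xs!i) \<le> m - i - 1" using A2[OF sy, of i] i True m_def by simp
        moreover have "Rc (mset xs) (xs!i) \<ge> n - i" using A1[OF sx, of i] i n_def by simp
        ultimately show False using c1[of "xs!i"] i True by linarith
      qed
      show "i+1 < n \<longrightarrow> ys!i \<le> xs!(i+1)"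
      proof
        assume i1: "i+1 < n"
        show "ys!i \<le> xs!(i+1)"
        proof (rule ccontr)
          assume "\<not> ys!i \<le> xs!(i+1)"
          then have "Rc (mset xs) (ys!i) \<le> n - (i+1) - 1" using A2[OF sx, of "i+1"] i1 n_def by simp
          moreover have "Rc (mset ys) (ys!i) \<ge> m - i" using A1[OF sy, of i] i True m_def by simp
          ultimately show False using c2[of "ys!i"] i1 True by linarith
        qed
      qed
    qed
    then show ?thesis using True n_def m_def by auto
  next
    case False
    then have mn: "m = n + 1" using nm by simp
    have "ys!i \<le> xs!i \<and> xs!i \<le> ys!(i+1)" if i: "i < n" for i
    proof
      show "ys!i \<le> xs!i"
      proof (rule ccontr)
        assume "\<not> ys!i \<le> xs!i"
        then have "Rc (mset xs) (ys!i) \<le> n - i - 1" using A2[OF sx, of i] i n_def by simp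
        moreover have "Rc (mset ys) (ys!i) \<ge> m - i" using A1[OF sy, of i] i mn m_def by simp
        ultimately show False using c2[of "ys!i"] i mn by linarith
      qed
      show "xs!i \<le> ys!(i+1)"
      proof (rule ccontr)
        assume "\<not> xs!i \<le> ys!(i+1)"
        then have "Rc (mset ys) (xs!i) \<le> m - (i+1) - 1" using A2[OF sy, of "i+1"] i mn m_def by simp
        moreover have "Rc (mset xs) (xs!i) \<ge> n - i" using A1[OF sx, of i] i n_def by simp
        ultimately show False using c1[of "xs!i"] i mn by linarith
      qed
    qed
    then show ?thesis using mn n_def m_def by auto
  qed
qed


lemma in_lemma:
  assumes "interp_1cube A B" "A \<noteq> 0" "B \<noteq> 0"
  shows "\<exists>X Y. rr A X \<and> rr B Y \<and> IL X Y \<and> (\<forall>z\<in>#X. z \<le> 0) \<and> (\<forall>z\<in>#Y. z \<le> 0)"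
proof -
  from assms obtain xs ys where zx: "zero_list A xs" and zy: "zero_list B ys" and
    cs: "(degree B = degree A + 1 \<and> (\<forall>i<length xs. ys ! i \<le> xs ! i \<and> xs ! i \<le> ys ! (i + 1))) \<or>
         (degree A = degree B \<and> (\<forall>i<length xs. xs ! i \<le> ys ! i \<and>
                (i + 1 < length xs \<longrightarrow> ys ! i \<le> xs ! (i + 1))))"
    unfolding interp_1cube_def interlaces_def by blast
  have eA: "A = smult (lead_coeff A) (pm (mset xs))" using zx unfolding zero_list_def pm_list by blast
  have eB: "B = smult (lead_coeff B) (pm (mset ys))" using zy unfolding zero_list_def pm_list by blast
  have lA: "lead_coeff A > 0" and lB: "lead_coeff B > 0"
    using assms unfolding interp_1cube_def standard_def by auto
  have "degree A = degree (smult (lead_coeff A) (pm (mset xs)))" using eA by (metis)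
  then have dA: "degree A = length xs" using lA assms(2) by simp
  have "degree B = degree (smult (lead_coeff B) (pm (mset ys)))" using eB by (metis)
  then have dB: "degree B = length ys" using lB assms(3) by simp
  have il: "IL (mset xs) (mset ys)" by (rule IL_of_idx) (use cs dA dB in auto)
  have nA: "only_nonpos_zeros A" and nB: "only_nonpos_zeros B"
    using assms(1) unfolding interp_1cube_def by auto
  have "\<forall>z\<in># mset xs. z \<le> 0" using nonpos_of[OF nA eA] assms(2) by simp
  moreover have "\<forall>z\<in># mset ys. z \<le> 0" using nonpos_of[OF nB eB] assms(3) by simp
  moreover have "rr A (mset xs)" unfolding rr_def using eA lA by blast
  moreover have "rr B (mset ys)" unfolding rr_def using eB lB by blast
  ultimately show ?thesis using il by blast
qed

lemma out_lemma:
  assumes P: "rr P Z" and Q: "rr Q W" and il: "IL Z W"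
    and nZ: "\<forall>z\<in>#Z. z \<le> 0" and nW: "\<forall>z\<in>#W. z \<le> 0"
  shows "interp_1cube P Q"
proof -
  note p = rr_props[OF P nZ] and q = rr_props[OF Q nW]
  define xs where "xs = sorted_list_of_multiset Z"
  define ys where "ys = sorted_list_of_multiset W"
  have mx: "mset xs = Z" and my: "mset ys = W" by (simp_all add: xs_def ys_def)
  have zx: "zero_list P xs" unfolding zero_list_def pm_list using p mx by (simp add: xs_def)
  have zy: "zero_list Q ys" unfolding zero_list_def pm_list using q my by (simp add: ys_def)
  have dP: "degree P = length xs" using p(5) mx by (metis size_mset)
  have dQ: "degree Q = length ys" using q(5) my by (metis size_mset)
  have "(length ys = length xs + 1 \<and> (\<forall>i<length xs. ys!i \<le> xs!i \<and> xs!i \<le> ys!(i+1))) \<or>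
           (length xs = length ys \<and> (\<forall>i<length xs. xs!i \<le> ys!i \<and> (i+1 < length xs \<longrightarrow> ys!i \<le> xs!(i+1))))"
    by (rule idx_of_IL) (use il mx my in \<open>auto simp: xs_def ys_def\<close>)
  then have "interlaces P Q"
    unfolding interlaces_def using p(4) q(4) zx zy dP dQ by metis
  then show ?thesis unfolding interp_1cube_def using p q by blast
qed

lemma IL_refl: "IL X X" unfolding IL_def by simp

lemma cube00: "interp_1cube 0 0"
  unfolding interp_1cube_def standard_def only_nonpos_zeros_def interlaces_def by simp

lemma Slem:
  assumes "interp_1cube P Q"
  shows "interp_1cube Q ([:0,1:] * P)"
proof (cases "P = 0")
  case True
  then show ?thesis using assms unfolding interp_1cube_def interlaces_def standard_def
      only_nonpos_zeros_def by simp
next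
  case Pnz: False
  show ?thesis
  proof (cases "Q = 0")
    case True
    obtain X where X: "rr P X" "\<forall>z\<in>#X. z \<le> 0"
      using rr_of[OF Pnz] assms unfolding interp_1cube_def by blast
    have "rr ([:0,1:] * P) (add_mset 0 X)" using rr_x[OF X(1)] .
    then have "standard ([:0,1:] * P)" "only_nonpos_zeros ([:0,1:] * P)"
      using rr_props[of "[:0,1:] * P" "add_mset 0 X"] X(2) by auto
    then show ?thesis using True unfolding interp_1cube_def interlaces_def standard_def
      only_nonpos_zeros_def by simp
  next
    case Qnz: False
    obtain X Y where XY: "rr P X" "rr Q Y" "IL X Y" "\<forall>z\<in>#X. z \<le> 0" "\<forall>z\<in>#Y. z \<le> 0"
      using in_lemma[OF assms Pnz Qnz] by blast
    show ?thesis
      by (rule out_lemma[OF XY(2) rr_x[OF XY(1)] IL_x[OF XY(3) XY(5)] XY(5)]) (use XY(4) in simp)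
  qed
qed

lemma Mlem:
  fixes l r :: real
  assumes l: "l > 0" and r: "r > 0" and c: "interp_1cube P Q"
  shows "interp_1cube (smult l P + smult r Q) (smult l Q + smult r ([:0,1:] * P))"
proof (cases "P = 0")
  case Pz: True
  show ?thesis
  proof (cases "Q = 0")
    case True then show ?thesis using Pz cube00 by simp
  next
    case Qnz: False
    obtain Y where Y: "rr Q Y" "\<forall>z\<in>#Y. z \<le> 0"
      using rr_of[OF Qnz] c unfolding interp_1cube_def by blast
    show ?thesis using out_lemma[OF rr_smult[OF Y(1) r] rr_smult[OF Y(1) l] IL_refl Y(2) Y(2)] Pz
      by simp
  qed
next
  case Pnz: False
  show ?thesis
  proof (cases "Q = 0")
    case True
    obtain X where X: "rr P X" "\<forall>z\<in>#X. z \<le> 0"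
      using rr_of[OF Pnz] c unfolding interp_1cube_def by blast
    have "interp_1cube (smult l P) (smult r ([:0,1:] * P))"
      by (rule out_lemma[OF rr_smult[OF X(1) l] rr_smult[OF rr_x[OF X(1)] r] IL_x[OF IL_refl X(2)] X(2)])
         (use X(2) in simp)
    then show ?thesis using True by simp
  next
    case Qnz: False
    obtain X Y where XY: "rr P X" "rr Q Y" "IL X Y" "\<forall>z\<in>#X. z \<le> 0" "\<forall>z\<in>#Y. z \<le> 0"
      using in_lemma[OF c Pnz Qnz] by blast
    obtain Z W where ZW: "rr (smult l P + smult r Q) Z" "rr (smult l Q + smult r ([:0,1:] * P)) W"
      "IL Z W" "\<forall>z\<in>#Z. z \<le> 0" "\<forall>z\<in>#W. z \<le> 0"
      using M_core[OF l r XY] by blast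
    show ?thesis using out_lemma[OF ZW] .
  qed
qed

theorem lemma4p4:
  fixes A B :: "real poly"
  assumes "interp_1cube A B"
  shows "interp_square A B B ([:0, 1:] * A)"
  unfolding interp_square_def
proof (intro allI impI conjI)
  fix l r :: real assume l: "l > 0" and r: "r > 0"
  show "interp_1cube (smult l A + smult r B) (smult l B + smult r ([:0, 1:] * A))"
    using Mlem[OF l r assms] .
  have "interp_1cube (smult l B + smult r ([:0, 1:] * A)) (smult l ([:0, 1:] * A) + smult r ([:0, 1:] * B))"
    using Mlem[OF l r Slem[OF assms]] .
  then show "interp_1cube (smult l B + smult r ([:0, 1:] * A)) (smult l ([:0, 1:] * A) + smult r ([:0, 1:] * B))" .
qed

end
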